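(* For the class $\mathcal I_m$ of VCG auctions with bidder-specific reserves in $\{1/m,2/m,\dots,1\}$, the matrix $\Gamma^{\mathrm{VCG}}$ is $(2,1)$-admissible and implementable with complexity $m$ (with respect to learner actions $\mathcal I_m$, adversary actions = valuation profiles in $[0,1]^n$, and payoff $f(\vec r,\vec v)=\mathrm{Rev}(\vec r,\vec v)$).
   Context: Single-parameter setting: $n$ bidders, a family $\mathcal S\subseteq 2^{[n]}$ of feasible sets of bidders that can be served simultaneously, with $\emptyset\in\mathcal S$ and $\{i\}\in\mathcal S$ for every $i$. A valuation profile is $\vec v\in[0,1]^n$. A VCG auction with bidder-specific reserves $\vec r=(r_1,\dots,r_n)$: all bidders with $v_i<r_i$ are removed; if none remain nothing is allocated; otherwise a feasible set of remaining bidders maximizing $\sum v_i$ over served bidders is served, and each served bidder is charged the larger of $r_i$ and his VCG payment (the externality he imposes on the other remaining bidders, i.e., the maximum welfare of the others over feasible sets minus their welfare in the chosen allocation). $\mathrm{Rev}(\vec r,\vec v)$ is the total charge. $\mathcal I_m$ is the set of such auctions with every $r_i\in\{1/m,\dots,m/m\}$. $\Gamma^{\mathrm{VCG}}$ is the $|\mathcal I_m|\times n\lceil\log_2 m\rceil$ binary matrix whose entry in row $\vec r$ and column $j=(i-1)\lceil\log_2 m\rceil+\beta$ ($i\le n$, $1\le\beta\le\lceil\log_2 m\rceil$) is the $\beta$-th bit of the binary representation of the integer $mr_i$. A matrix $\Gamma$ (rows indexed by learner actions $x$) is $(\kappa,\delta)$-admissible if its rows are pairwise distinct, each column has at most $\kappa$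 distinct values, and distinct values in a column differ by at least $\delta$. It is implementable with complexity $M$ if for each column $j$ there is a finite set $S_j$ of pairs $(w,y)$ with weight $w\ge0$ and adversary action $y$, $|S_j|\le M$, such that $\Gamma_{xj}-\Gamma_{x'j}=\sum_{(w,y)\in S_j}w(f(x,y)-f(x',y))$ for all learner actions $x,x'$. *)

theory Defs
  imports Complex_Main
begin

text \<open>Bidders are 0,...,n-1. Valuation profiles and reserve vectors are functions
  nat => real, fixed to 0 outside the bidder range.\<close>

definition welfare :: "(nat \<Rightarrow> real) \<Rightarrow> nat set \<Rightarrow> real" where
  "welfare v A = (\<Sum>i\<in>A. v i)"

definition remaining :: "nat \<Rightarrow> (nat \<Rightarrow> real) \<Rightarrow> (nat \<Rightarrow> real) \<Rightarrow> nat set" where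
  "remaining n r v = {i. i < n \<and> r i \<le> v i}"

definition opt_welfare :: "nat set set \<Rightarrow> (nat \<Rightarrow> real) \<Rightarrow> nat set \<Rightarrow> real" where
  "opt_welfare S v R = Max {welfare v T | T. T \<in> S \<and> T \<subseteq> R}"

definition valid_alloc :: "nat \<Rightarrow> nat set set \<Rightarrow> ((nat \<Rightarrow> real) \<Rightarrow> (nat \<Rightarrow> real) \<Rightarrow> nat set) \<Rightarrow> bool" where
  "valid_alloc n S a \<longleftrightarrow>
     (\<forall>r v. remaining n r v \<noteq> {} \<longrightarrow>
        a r v \<in> S \<and> a r v \<subseteq> remaining n r v \<and>
        welfare v (a r v) = opt_welfare S v (remaining n r v))"

text \<open>Revenue of the VCG auction with reserves r on profile v: each served bidder pays
  the max of his reserve and his VCG payment (externality on the other remaining bidders).\<close>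
definition Rev :: "nat \<Rightarrow> nat set set \<Rightarrow> ((nat \<Rightarrow> real) \<Rightarrow> (nat \<Rightarrow> real) \<Rightarrow> nat set)
                    \<Rightarrow> (nat \<Rightarrow> real) \<Rightarrow> (nat \<Rightarrow> real) \<Rightarrow> real" where
  "Rev n S a r v =
     (let R = remaining n r v; A = a r v in
      if R = {} then 0
      else (\<Sum>i\<in>A. max (r i) (opt_welfare S v (R - {i}) - welfare v (A - {i}))))"

definition Imcls :: "nat \<Rightarrow> nat \<Rightarrow> (nat \<Rightarrow> real) set" where
  "Imcls n m = {r. (\<forall>i<n. \<exists>k\<in>{1..m}. r i = real k / real m) \<and> (\<forall>i. n \<le> i \<longrightarrow> r i = 0)}"

definition profiles :: "nat \<Rightarrow> (nat \<Rightarrow> real) set" where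
  "profiles n = {v. (\<forall>i<n. 0 \<le> v i \<and> v i \<le> 1) \<and> (\<forall>i. n \<le> i \<longrightarrow> v i = 0)}"

definition nbits :: "nat \<Rightarrow> nat" where
  "nbits m = nat \<lceil>log 2 (real m)\<rceil>"

text \<open>Columns: pairs (i, beta), i < n, 1 <= beta <= ceil(log2 m); corresponds to
  column (i-1)*ceil(log2 m)+beta with 1-based bidder index.\<close>
definition cols :: "nat \<Rightarrow> nat \<Rightarrow> (nat \<times> nat) set" where
  "cols n m = {(i, \<beta>). i < n \<and> 1 \<le> \<beta> \<and> \<beta> \<le> nbits m}"

text \<open>Bit beta (beta = 1 least significant) of the integer m * r_i.\<close>
definition GammaVCG :: "nat \<Rightarrow> (nat \<Rightarrow> real) \<Rightarrow> nat \<times> nat \<Rightarrow> real" where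
  "GammaVCG m r j = (case j of (i, \<beta>) \<Rightarrow>
      real ((nat \<lfloor>real m * r i\<rfloor> div 2 ^ (\<beta> - 1)) mod 2))"

definition admissible :: "'x set \<Rightarrow> 'j set \<Rightarrow> ('x \<Rightarrow> 'j \<Rightarrow> real) \<Rightarrow> nat \<Rightarrow> real \<Rightarrow> bool" where
  "admissible X J \<Gamma> \<kappa> \<delta> \<longleftrightarrow>
     (\<forall>x\<in>X. \<forall>x'\<in>X. x \<noteq> x' \<longrightarrow> (\<exists>j\<in>J. \<Gamma> x j \<noteq> \<Gamma> x' j)) \<and>
     (\<forall>j\<in>J. finite ((\<lambda>x. \<Gamma> x j) ` X) \<and> card ((\<lambda>x. \<Gamma> x j) ` X) \<le> \<kappa> \<and>
        (\<forall>x\<in>X. \<forall>x'\<in>X. \<Gamma> x j \<noteq> \<Gamma> x' j \<longrightarrow> \<delta> \<le> \<bar>\<Gamma> x j - \<Gamma> x' j\<bar>))"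

definition implementable :: "'x set \<Rightarrow> 'y set \<Rightarrow> 'j set \<Rightarrow> ('x \<Rightarrow> 'j \<Rightarrow> real)
                               \<Rightarrow> ('x \<Rightarrow> 'y \<Rightarrow> real) \<Rightarrow> nat \<Rightarrow> bool" where
  "implementable X Y J \<Gamma> f M \<longleftrightarrow>
     (\<forall>j\<in>J. \<exists>Sj :: (real \<times> 'y) set. finite Sj \<and> card Sj \<le> M \<and>
        (\<forall>(w, y)\<in>Sj. 0 \<le> w \<and> y \<in> Y) \<and>
        (\<forall>x\<in>X. \<forall>x'\<in>X. \<Gamma> x j - \<Gamma> x' j = (\<Sum>(w, y)\<in>Sj. w * (f x y - f x' y))))"

end

theory Submission imports Defs begin

lemma m_le_pow_nbits: assumes "1 \<le> m" shows "m \<le> 2 ^ nbits m"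
proof -
  have l0: "0 \<le> log 2 (real m)" using assms by simp
  have "log 2 (real m) \<le> real_of_int \<lceil>log 2 (real m)\<rceil>" by (rule le_of_int_ceiling)
  hence "real m \<le> 2 powr real_of_int \<lceil>log 2 (real m)\<rceil>"
    using assms by (subst log_le_iff[symmetric]) auto
  also have "real_of_int \<lceil>log 2 (real m)\<rceil> = real (nbits m)"
    using l0 unfolding nbits_def by simp
  also have "(2::real) powr real (nbits m) = 2 ^ nbits m" by (simp add: powr_realpow)
  finally show ?thesis by (metis of_nat_le_iff of_nat_numeral of_nat_power)
qed

lemma bits_agree_mod:
  "(\<forall>\<beta><nb. ((t::nat) div 2^\<beta>) mod 2 = (t' div 2^\<beta>) mod 2) \<Longrightarrow> t mod 2^nb = t' mod 2^nb"
proof (induction nb)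
  case 0 then show ?case by simp
next
  case (Suc nb)
  have e: "\<And>x::nat. x mod 2^Suc nb = 2^nb * (x div 2^nb mod 2) + x mod 2^nb"
    by (metis mod_mult2_eq power_Suc2)
  show ?case using Suc by (simp only: e) auto
qed

lemma bits_distinct:
  assumes "1 \<le> t" "t \<le> m" "1 \<le> t'" "t' \<le> m" "t \<noteq> t'" "m \<le> 2^nb"
  shows "\<exists>\<beta>. 1 \<le> \<beta> \<and> \<beta> \<le> nb \<and> ((t::nat) div 2^(\<beta>-1)) mod 2 \<noteq> (t' div 2^(\<beta>-1)) mod 2"
proof (rule ccontr)
  assume "\<not> ?thesis"
  hence "\<forall>\<beta><nb. (t div 2^\<beta>) mod 2 = (t' div 2^\<beta>) mod 2"
    by (metis Suc_leI diff_Suc_1 le_add1 plus_1_eq_Suc)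
  hence eq: "t mod 2^nb = t' mod 2^nb" by (rule bits_agree_mod)
  have "t mod 2^nb = (if t = 2^nb then 0 else t)" using assms by auto
  moreover have "t' mod 2^nb = (if t' = 2^nb then 0 else t')" using assms by auto
  ultimately show False using eq assms by (auto split: if_splits)
qed


definition tt :: "nat \<Rightarrow> (nat \<Rightarrow> real) \<Rightarrow> nat \<Rightarrow> nat" where
  "tt m r i = nat \<lfloor>real m * r i\<rfloor>"

lemma Imcls_tt:
  assumes "r \<in> Imcls n m" "i < n" "1 \<le> m"
  shows "1 \<le> tt m r i \<and> tt m r i \<le> m \<and> r i = real (tt m r i) / real m"
proof -
  obtain k where k: "k \<in> {1..m}" "r i = real k / real m" using assms unfolding Imcls_def by auto
  have "real m * r i = real k" using k assms by simp
  hence "tt m r i = k" unfolding tt_def by simp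
  thus ?thesis using k by simp
qed

lemma Imcls_pos: "r \<in> Imcls n m \<Longrightarrow> j < n \<Longrightarrow> 1 \<le> m \<Longrightarrow> 0 < r j"
  unfolding Imcls_def by fastforce

definition vk :: "nat \<Rightarrow> nat \<Rightarrow> nat \<Rightarrow> nat \<Rightarrow> real" where
  "vk m i k = (\<lambda>j. if j = i then real k / real m else 0)"

lemma Rev_vk:
  assumes "1 \<le> m" "{} \<in> S" "\<forall>i<n. {i} \<in> S" "valid_alloc n S a"
    and r: "r \<in> Imcls n m" and i: "i < n" and k: "1 \<le> k"
  shows "Rev n S a r (vk m i k) = (if r i \<le> real k / real m then r i else 0)"
proof -
  let ?v = "vk m i k"
  have rem: "remaining n r ?v = (if r i \<le> real k / real m then {i} else {})"
    using Imcls_pos[OF r _ assms(1)] i unfolding remaining_def vk_def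
    by (auto simp: not_le) (meson not_le)
  have ow0: "opt_welfare S v {} = 0" for v
  proof -
    have "{welfare v T | T. T \<in> S \<and> T \<subseteq> {}} = {0}" using assms(2) by (auto simp: welfare_def)
    thus ?thesis unfolding opt_welfare_def by simp
  qed
  show ?thesis
  proof (cases "r i \<le> real k / real m")
    case False thus ?thesis using rem unfolding Rev_def by simp
  next
    case True
    have kpos: "0 < real k / real m" using k assms(1) by simp
    have set: "{welfare ?v T | T. T \<in> S \<and> T \<subseteq> {i}} = {0, real k / real m}"
    proof -
      have "{i} \<in> S" using assms(3) i by blast
      hence "{welfare ?v T | T. T \<in> S \<and> T \<subseteq> {i}} = {welfare ?v {}, welfare ?v {i}}"
        using assms(2) by (auto simp: subset_singleton_iff)
      thus ?thesis by (simp add: welfare_def vk_def)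
    qed
    have owi: "opt_welfare S ?v {i} = real k / real m"
      unfolding opt_welfare_def set using kpos by simp
    have va: "a r ?v \<in> S" "a r ?v \<subseteq> {i}" "welfare ?v (a r ?v) = real k / real m"
    proof -
      have remi: "remaining n r ?v = {i}" using rem True by simp
      show "a r ?v \<in> S" "a r ?v \<subseteq> {i}" "welfare ?v (a r ?v) = real k / real m"
        using assms(4)[unfolded valid_alloc_def, rule_format, of r ?v] remi owi by simp_all
    qed
    have "a r ?v = {i}"
    proof (rule ccontr)
      assume "a r ?v \<noteq> {i}"
      hence "a r ?v = {}" using va(2) by blast
      hence "welfare ?v (a r ?v) = 0" by (simp add: welfare_def)
      thus False using va(3) kpos by linarith
    qed
    moreover have "0 < r i" using Imcls_pos[OF r i assms(1)] .
    ultimately show ?thesis using rem True ow0 unfolding Rev_def by (simp add: welfare_def)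
  qed
qed


definition bb :: "nat \<Rightarrow> nat \<Rightarrow> real" where
  "bb \<beta> t = real ((t div 2^(\<beta>-1)) mod 2)"

lemma bb_range: "bb \<beta> t = 0 \<or> bb \<beta> t = 1"
  unfolding bb_def by (cases "(t div 2^(\<beta>-1)) mod 2 = 0") auto

definition WW :: "nat \<Rightarrow> nat \<Rightarrow> nat \<Rightarrow> real" where
  "WW m \<beta> t = (if t \<le> m then real m * (bb \<beta> t + real m) / real t else 0)"

definition ww :: "nat \<Rightarrow> nat \<Rightarrow> nat \<Rightarrow> real" where
  "ww m \<beta> k = WW m \<beta> k - WW m \<beta> (Suc k)"

lemma ww_nonneg: assumes "1 \<le> k" "k \<le> m" shows "0 \<le> ww m \<beta> k"
proof (cases "k = m")
  case True
  have "0 \<le> bb \<beta> k" using bb_range[of \<beta> k] by auto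
  thus ?thesis using True unfolding ww_def WW_def by simp
next
  case False
  hence km: "Suc k \<le> m" using assms by simp
  have b0: "0 \<le> bb \<beta> k" using bb_range[of \<beta> k] by auto
  have b1: "bb \<beta> (Suc k) \<le> 1" using bb_range[of \<beta> "Suc k"] by auto
  have "real k * (bb \<beta> (Suc k) + real m) \<le> real (Suc k) * (bb \<beta> k + real m)"
  proof -
    have "real k * bb \<beta> (Suc k) \<le> real k" using b1 by (simp add: mult_left_le)
    also have "\<dots> \<le> real m" using assms by simp
    also have "\<dots> \<le> real (Suc k) * bb \<beta> k + real m" using b0 by simp
    finally show ?thesis by (simp add: algebra_simps)
  qed
  hence "(bb \<beta> (Suc k) + real m) / real (Suc k) \<le> (bb \<beta> k + real m) / real k"
    using assms by (simp add: divide_simps algebra_simps)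
  hence "real m * ((bb \<beta> (Suc k) + real m) / real (Suc k)) \<le> real m * ((bb \<beta> k + real m) / real k)"
    by (rule mult_left_mono) simp
  thus ?thesis using km assms unfolding ww_def WW_def by simp
qed

lemma ww_sum:
  assumes "1 \<le> t" "t \<le> m"
  shows "(\<Sum>k\<in>{1..m}. ww m \<beta> k * (if t \<le> k then real t / real m else 0)) = bb \<beta> t + real m"
proof -
  have "(\<Sum>k\<in>{1..m}. ww m \<beta> k * (if t \<le> k then real t / real m else 0))
        = (\<Sum>k\<in>{1..m}. (if t \<le> k then real t / real m * ww m \<beta> k else 0))"
    by (rule sum.cong) auto
  also have "\<dots> = (\<Sum>k\<in>{k\<in>{1..m}. t \<le> k}. real t / real m * ww m \<beta> k)"
    by (rule sum.inter_filter[symmetric]) simp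
  also have "{k\<in>{1..m}. t \<le> k} = {t..m}" using assms by auto
  also have "(\<Sum>k\<in>{t..m}. real t / real m * ww m \<beta> k) = real t / real m * (\<Sum>k\<in>{t..m}. ww m \<beta> k)"
    by (simp add: sum_distrib_left)
  also have "(\<Sum>k\<in>{t..m}. ww m \<beta> k) = - (\<Sum>k\<in>{t..m}. WW m \<beta> (Suc k) - WW m \<beta> k)"
    unfolding ww_def by (simp add: sum_negf[symmetric])
  also have "(\<Sum>k\<in>{t..m}. WW m \<beta> (Suc k) - WW m \<beta> k) = WW m \<beta> (Suc m) - WW m \<beta> t"
    using assms by (intro sum_Suc_diff) simp
  also have "WW m \<beta> (Suc m) = 0" unfolding WW_def by simp
  also have "WW m \<beta> t = real m * (bb \<beta> t + real m) / real t" unfolding WW_def using assms by simp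
  finally have eq: "(\<Sum>k\<in>{1..m}. ww m \<beta> k * (if t \<le> k then real t / real m else 0))
     = real t / real m * - (0 - real m * (bb \<beta> t + real m) / real t)" .
  have "real t / real m * - (0 - real m * (bb \<beta> t + real m) / real t) = bb \<beta> t + real m"
    using assms by (simp add: field_simps)
  with eq show ?thesis by simp
qed

lemma Gamma_bb: "GammaVCG m r (i, \<beta>) = bb \<beta> (tt m r i)"
  unfolding GammaVCG_def bb_def tt_def by simp

theorem lemma3p1:
  fixes n m :: nat and S :: "nat set set"
    and a :: "(nat \<Rightarrow> real) \<Rightarrow> (nat \<Rightarrow> real) \<Rightarrow> nat set"
  assumes "1 \<le> m"
    and "S \<subseteq> Pow {..<n}" and "{} \<in> S" and "\<forall>i<n. {i} \<in> S"
    and "valid_alloc n S a"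
  shows "admissible (Imcls n m) (cols n m) (GammaVCG m) 2 1 \<and>
         implementable (Imcls n m) (profiles n) (cols n m) (GammaVCG m) (Rev n S a) m"
proof
  show "admissible (Imcls n m) (cols n m) (GammaVCG m) 2 1"
    unfolding admissible_def
  proof (intro conjI ballI impI)
    fix x x' assume x: "x \<in> Imcls n m" and x': "x' \<in> Imcls n m" and ne: "x \<noteq> x'"
    then obtain i where xi: "x i \<noteq> x' i" by auto
    have i: "i < n"
    proof (rule ccontr)
      assume "\<not> i < n"
      thus False using x x' xi unfolding Imcls_def by auto
    qed
    have t: "1 \<le> tt m x i \<and> tt m x i \<le> m \<and> x i = real (tt m x i) / real m"
      using Imcls_tt[OF x i assms(1)] .
    have t': "1 \<le> tt m x' i \<and> tt m x' i \<le> m \<and> x' i = real (tt m x' i) / real m"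
      using Imcls_tt[OF x' i assms(1)] .
    have "tt m x i \<noteq> tt m x' i" using t t' xi by metis
    then obtain \<beta> where b: "1 \<le> \<beta>" "\<beta> \<le> nbits m"
      "(tt m x i div 2^(\<beta>-1)) mod 2 \<noteq> (tt m x' i div 2^(\<beta>-1)) mod 2"
      using bits_distinct[of "tt m x i" m "tt m x' i" "nbits m"] t t' m_le_pow_nbits[OF assms(1)]
      by blast
    show "\<exists>j\<in>cols n m. GammaVCG m x j \<noteq> GammaVCG m x' j"
    proof (rule bexI[of _ "(i, \<beta>)"])
      show "(i, \<beta>) \<in> cols n m" using i b unfolding cols_def by simp
      show "GammaVCG m x (i, \<beta>) \<noteq> GammaVCG m x' (i, \<beta>)"
        using b(3) unfolding Gamma_bb bb_def by simp
    qed
  next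
    fix j assume "j \<in> cols n m"
    obtain i \<beta> where j: "j = (i, \<beta>)" by fastforce
    have sub: "(\<lambda>x. GammaVCG m x j) ` Imcls n m \<subseteq> {0, 1}"
      using bb_range unfolding j Gamma_bb by blast
    show "finite ((\<lambda>x. GammaVCG m x j) ` Imcls n m)" using sub finite_subset by blast
    show "card ((\<lambda>x. GammaVCG m x j) ` Imcls n m) \<le> 2"
      using card_mono[OF _ sub] by (simp add: card_insert_if)
  next
    fix j x x' assume "j \<in> cols n m" "x \<in> Imcls n m" "x' \<in> Imcls n m"
      and d: "GammaVCG m x j \<noteq> GammaVCG m x' j"
    obtain i \<beta> where j: "j = (i, \<beta>)" by fastforce
    show "1 \<le> \<bar>GammaVCG m x j - GammaVCG m x' j\<bar>"
      using d bb_range[of \<beta> "tt m x i"] bb_range[of \<beta> "tt m x' i"] unfolding j Gamma_bb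
      by auto
  qed
next
  show "implementable (Imcls n m) (profiles n) (cols n m) (GammaVCG m) (Rev n S a) m"
    unfolding implementable_def
  proof
    fix j assume "j \<in> cols n m"
    then obtain i \<beta> where j: "j = (i, \<beta>)" and i: "i < n" unfolding cols_def by blast
    let ?h = "\<lambda>k. (ww m \<beta> k, vk m i k)"
    let ?Sj = "?h ` {1..m}"
    have inj: "inj_on ?h {1..m}"
    proof
      fix k k' assume "k \<in> {1..m}" "k' \<in> {1..m}" "?h k = ?h k'"
      hence "vk m i k i = vk m i k' i" by simp
      hence "real k / real m = real k' / real m" unfolding vk_def by simp
      thus "k = k'" using assms(1) by simp
    qed
    have G: "(\<Sum>k\<in>{1..m}. ww m \<beta> k * Rev n S a x (vk m i k)) = GammaVCG m x j + real m"
      if x: "x \<in> Imcls n m" for x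
    proof -
      have t: "1 \<le> tt m x i \<and> tt m x i \<le> m \<and> x i = real (tt m x i) / real m"
        using Imcls_tt[OF x i assms(1)] .
      have "(\<Sum>k\<in>{1..m}. ww m \<beta> k * Rev n S a x (vk m i k))
          = (\<Sum>k\<in>{1..m}. ww m \<beta> k * (if tt m x i \<le> k then real (tt m x i) / real m else 0))"
      proof (rule sum.cong)
        fix k assume k: "k \<in> {1..m}"
        have "Rev n S a x (vk m i k) = (if x i \<le> real k / real m then x i else 0)"
          using Rev_vk[OF assms(1,3,4,5) x i] k by simp
        also have "(x i \<le> real k / real m) = (tt m x i \<le> k)"
          using t assms(1) by (simp add: divide_le_cancel)
        finally show "ww m \<beta> k * Rev n S a x (vk m i k)
          = ww m \<beta> k * (if tt m x i \<le> k then real (tt m x i) / real m else 0)" using t by simp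
      qed simp
      also have "\<dots> = bb \<beta> (tt m x i) + real m" using ww_sum t by blast
      finally show ?thesis unfolding j Gamma_bb .
    qed
    show "\<exists>Sj :: (real \<times> (nat \<Rightarrow> real)) set. finite Sj \<and> card Sj \<le> m \<and>
        (\<forall>(w, y)\<in>Sj. 0 \<le> w \<and> y \<in> profiles n) \<and>
        (\<forall>x\<in>Imcls n m. \<forall>x'\<in>Imcls n m. GammaVCG m x j - GammaVCG m x' j
            = (\<Sum>(w, y)\<in>Sj. w * (Rev n S a x y - Rev n S a x' y)))"
    proof (intro exI conjI ballI)
      show "finite ?Sj" by simp
      show "card ?Sj \<le> m" using card_image_le[of "{1..m}" ?h] by simp
      fix p assume "p \<in> ?Sj"
      then obtain k where k: "k \<in> {1..m}" "p = ?h k" by blast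
      have "0 \<le> ww m \<beta> k" using k ww_nonneg by simp
      moreover have "vk m i k \<in> profiles n"
        using k i assms(1) unfolding profiles_def vk_def by auto
      ultimately show "case p of (w, y) \<Rightarrow> 0 \<le> w \<and> y \<in> profiles n" using k by simp
    next
      fix x x' assume x: "x \<in> Imcls n m" and x': "x' \<in> Imcls n m"
      have "(\<Sum>(w, y)\<in>?Sj. w * (Rev n S a x y - Rev n S a x' y))
          = (\<Sum>k\<in>{1..m}. ww m \<beta> k * (Rev n S a x (vk m i k) - Rev n S a x' (vk m i k)))"
        by (subst sum.reindex[OF inj]) simp
      also have "\<dots> = (\<Sum>k\<in>{1..m}. ww m \<beta> k * Rev n S a x (vk m i k))
                    - (\<Sum>k\<in>{1..m}. ww m \<beta> k * Rev n S a x' (vk m i k))"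
        by (simp add: right_diff_distrib sum_subtractf)
      also have "\<dots> = GammaVCG m x j - GammaVCG m x' j" using G[OF x] G[OF x'] by simp
      finally show "GammaVCG m x j - GammaVCG m x' j
            = (\<Sum>(w, y)\<in>?Sj. w * (Rev n S a x y - Rev n S a x' y))" by simp
    qed
  qed
qed

end
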